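(* Let $A \subseteq \mathbb{R}^d$ be locally finite, let $0 \le p \le d$, and let $\gamma$ be a $p$-cell of the Delaunay mosaic of $A$ with dual $(d-p)$-dimensional Voronoi cell $\gamma^*$. Let $z_0$ be the intersection point of the affine hulls $\mathrm{aff}(\gamma)$ and $\mathrm{aff}(\gamma^* )$, and let $R_0$ be the maximum distance between a point of $\gamma$ and a point of $\gamma^*$. Then the projection of the $p$-tile $J(\gamma,\gamma^* )$ to $\mathbb{R}^d$ (i.e. the set $\{x : (x,L) \in J(\gamma,\gamma^* ) \text{ for some } L\}$) is contained in the closed ball with center $z_0$ and radius $R_0$.
   Context: $\mathrm{Gr}(p,d)$ is the Grassmannian of linear $p$-planes in $\mathbb{R}^d$. The $p$-tile is $J(\gamma,\gamma^* ) = \{(x,L) \in \mathbb{R}^d \times \mathrm{Gr}(p,d) : x \in \text{the orthogonal projection of } \gamma \text{ onto } L+x, \text{ and } (L+x)\cap\gamma^* \neq \emptyset\}$. *)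

theory Defs
  imports "HOL-Analysis.Analysis"
begin

definition locally_finite_pts :: "'a::euclidean_space set \<Rightarrow> bool" where
  "locally_finite_pts A \<longleftrightarrow> (\<forall>S. bounded S \<longrightarrow> finite (A \<inter> S))"

definition voronoi_cell :: "'a::euclidean_space set \<Rightarrow> 'a set \<Rightarrow> 'a set" where
  "voronoi_cell A Q = {x. \<forall>a\<in>Q. \<forall>b\<in>A. dist x a \<le> dist x b}"

text \<open>The Delaunay cell is then convex hull Q and its dual Voronoi cell is
  voronoi_cell A Q.\<close>
definition delaunay_generators :: "'a::euclidean_space set \<Rightarrow> 'a set \<Rightarrow> bool" where
  "delaunay_generators A Q \<longleftrightarrow> Q \<subseteq> A \<and> Q \<noteq> {} \<and> voronoi_cell A Q \<noteq> {} \<and>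
     Q = {a\<in>A. voronoi_cell A Q \<subseteq> voronoi_cell A {a}}"

definition grassmannian :: "nat \<Rightarrow> 'a::euclidean_space set set" where
  "grassmannian p = {L. subspace L \<and> dim L = p}"

definition p_tile :: "'a::euclidean_space set \<Rightarrow> 'a set \<Rightarrow> nat \<Rightarrow> ('a \<times> 'a set) set" where
  "p_tile \<gamma> \<gamma>' p = {(x, L). L \<in> grassmannian p \<and>
      x \<in> closest_point ((\<lambda>v. x + v) ` L) ` \<gamma> \<and>
      ((\<lambda>v. x + v) ` L) \<inter> \<gamma>' \<noteq> {}}"

end

theory Submission
  imports Defs
begin

lemma aff_comb:
  fixes x y q :: "'a::real_vector"
  assumes "s + t = 1"
  shows "s *\<^sub>R x + t *\<^sub>R y - q = s *\<^sub>R (x - q) + t *\<^sub>R (y - q)"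
proof -
  have "s *\<^sub>R q + t *\<^sub>R q = q" using assms by (metis scaleR_left_distrib scaleR_one)
  then have "s *\<^sub>R x + t *\<^sub>R y - q = s *\<^sub>R x + t *\<^sub>R y - (s *\<^sub>R q + t *\<^sub>R q)" by simp
  also have "\<dots> = s *\<^sub>R (x - q) + t *\<^sub>R (y - q)" by (simp add: scaleR_diff_right)
  finally show ?thesis .
qed

lemma affine_orth_set:
  fixes c :: "'a::real_inner"
  shows "affine {u. \<forall>v\<in>V. inner (u - c) (g v) = 0}"
  unfolding affine_def
proof (intro ballI allI impI, simp only: mem_Collect_eq, intro ballI)
  fix x y v and s t :: real
  assume x: "\<forall>v\<in>V. inner (x - c) (g v) = 0" and y: "\<forall>v\<in>V. inner (y - c) (g v) = 0"
    and st: "s + t = 1" and v: "v \<in> V"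
  show "inner (s *\<^sub>R x + t *\<^sub>R y - c) (g v) = 0"
    using x y v by (simp add: aff_comb[OF st] inner_add_left)
qed

lemma affine_orth_set2:
  fixes v0 :: "'a::real_inner"
  shows "affine {v. inner w (v - v0) = 0}"
proof -
  have "{v. inner w (v - v0) = 0} = {v. \<forall>z\<in>{w}. inner (v - v0) ((\<lambda>z. z) z) = 0}"
    by (auto simp: inner_commute)
  thus ?thesis using affine_orth_set[where V="{w}" and c=v0 and g="\<lambda>z. z"] by simp
qed

lemma orth_aff:
  fixes Q V :: "'a::euclidean_space set"
  assumes Q0: "q0 \<in> Q" and V0: "v0 \<in> V"
    and H: "\<And>q v. q \<in> Q \<Longrightarrow> v \<in> V \<Longrightarrow> inner (q - q0) (v - v0) = 0"
    and u: "u \<in> affine hull Q" and v: "v \<in> affine hull V"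
  shows "inner (u - q0) (v - v0) = 0"
proof -
  have aff1: "affine {u. \<forall>v\<in>V. inner (u - q0) (v - v0) = 0}"
    by (rule affine_orth_set)
  have "Q \<subseteq> {u. \<forall>v\<in>V. inner (u - q0) (v - v0) = 0}" using H by auto
  hence "affine hull Q \<subseteq> {u. \<forall>v\<in>V. inner (u - q0) (v - v0) = 0}"
    by (rule hull_minimal) (rule aff1)
  with u have uV: "\<forall>v\<in>V. inner (u - q0) (v - v0) = 0" by auto
  have aff2: "affine {v. inner (u - q0) (v - v0) = 0}"
    by (rule affine_orth_set2)
  have "affine hull V \<subseteq> {v. inner (u - q0) (v - v0) = 0}"
    by (rule hull_minimal) (use uV in auto, rule aff2)
  with v show ?thesis by auto
qed

lemma key:
  fixes a b y :: "'a::real_inner"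
  assumes h: "inner (a - y) (b - y) \<le> 0" and o: "inner a b = 0"
  shows "norm y \<le> norm (a - b)"
proof -
  have e1: "inner (a - y) (b - y) = inner a b - inner y a - inner y b + inner y y"
    by (simp add: inner_diff_left inner_diff_right inner_commute)
  have e2: "inner y (a + b) = inner y a + inner y b" by (simp add: inner_add_right)
  have "norm y * norm y = inner y y" by (simp add: dot_square_norm power2_eq_square)
  also have "inner y y \<le> inner y (a + b)" using h o e1 e2 by linarith
  also have "\<dots> \<le> norm y * norm (a + b)"
    using Cauchy_Schwarz_ineq2[of y "a + b"] by linarith
  finally have "norm y * norm y \<le> norm y * norm (a + b)" .
  hence ny: "norm y \<le> norm (a + b)"
    by (cases "norm y = 0") (auto simp: mult_le_cancel_left)
  have "inner (a + b) (a + b) = inner a a + 2 * inner a b + inner b b"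
    by (simp add: inner_add_left inner_add_right inner_commute)
  moreover have "inner (a - b) (a - b) = inner a a - 2 * inner a b + inner b b"
    by (simp add: inner_diff_left inner_diff_right inner_commute)
  ultimately have "(norm (a + b))^2 = (norm (a - b))^2"
    using o by (simp add: power2_norm_eq_inner)
  hence "norm (a + b) = norm (a - b)" by (simp add: power2_eq_iff_nonneg)
  with ny show ?thesis by simp
qed

theorem lemma3p3:
  fixes A Q :: "'a::euclidean_space set" and p :: nat and z0 :: 'a
  assumes "locally_finite_pts A"
    and "p \<le> DIM('a)"
    and "delaunay_generators A Q"
    and "aff_dim (convex hull Q) = int p"
    and "aff_dim (voronoi_cell A Q) = int (DIM('a) - p)"
    and "z0 \<in> affine hull (convex hull Q) \<inter> affine hull (voronoi_cell A Q)"
  shows "\<forall>x \<in> fst ` p_tile (convex hull Q) (voronoi_cell A Q) p.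
           ereal (dist z0 x) \<le> (SUP (u, v) \<in> convex hull Q \<times> voronoi_cell A Q. ereal (dist u v))"
proof
  fix x assume "x \<in> fst ` p_tile (convex hull Q) (voronoi_cell A Q) p"
  then obtain L where "(x, L) \<in> p_tile (convex hull Q) (voronoi_cell A Q) p" by force
  then have L: "L \<in> grassmannian p"
    and xc: "x \<in> closest_point ((\<lambda>v. x + v) ` L) ` (convex hull Q)"
    and xv: "((\<lambda>v. x + v) ` L) \<inter> voronoi_cell A Q \<noteq> {}"
    unfolding p_tile_def by auto
  let ?V = "voronoi_cell A Q"
  let ?S = "(\<lambda>v. x + v) ` L"
  from xc obtain u where u: "u \<in> convex hull Q" and xu: "x = closest_point ?S u" by auto
  from xv obtain v where vS: "v \<in> ?S" and vV: "v \<in> ?V" by auto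
  have sub: "subspace L" using L unfolding grassmannian_def by auto
  have cS: "closed ?S" using closed_subspace[OF sub] by (simp add: closed_translation)
  have cvS: "convex ?S" using subspace_imp_convex[OF sub] by simp
  have dot: "inner (u - x) (v - x) \<le> 0"
    using closest_point_dot[OF cvS cS vS, of u] xu by simp
  have dg: "Q \<subseteq> A" "Q \<noteq> {}" "?V \<noteq> {}" using assms(3) unfolding delaunay_generators_def by auto
  obtain q0 where q0: "q0 \<in> Q" using dg by auto
  obtain v0 where v0: "v0 \<in> ?V" using dg by auto
  have eqd: "dist w q = dist w q'" if "w \<in> ?V" "q \<in> Q" "q' \<in> Q" for w q q'
  proof -
    have "\<forall>a\<in>Q. \<forall>b\<in>A. dist w a \<le> dist w b" using that(1) unfolding voronoi_cell_def by simp
    then have "dist w q \<le> dist w q'" "dist w q' \<le> dist w q" using that(2,3) dg(1) by auto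
    then show ?thesis by linarith
  qed
  have H: "inner (q - q0) (w - v0) = 0" if "q \<in> Q" "w \<in> ?V" for q w
  proof -
    have "(dist w q)^2 = (dist w q0)^2" "(dist v0 q)^2 = (dist v0 q0)^2"
      using eqd[OF that(2) that(1) q0] eqd[OF v0 that(1) q0] by simp_all
    hence "inner (w - q) (w - q) = inner (w - q0) (w - q0)" "inner (v0 - q) (v0 - q) = inner (v0 - q0) (v0 - q0)"
      unfolding dist_norm power2_norm_eq_inner by simp_all
    hence "inner w w - 2 * inner w q + inner q q = inner w w - 2 * inner w q0 + inner q0 q0"
      "inner v0 v0 - 2 * inner v0 q + inner q q = inner v0 v0 - 2 * inner v0 q0 + inner q0 q0"
      by (simp_all add: inner_diff_left inner_diff_right inner_commute)
    moreover have "inner (q - q0) (w - v0) = inner w q - inner v0 q - inner w q0 + inner v0 q0"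
      by (simp add: inner_diff_left inner_diff_right inner_commute)
    ultimately show ?thesis by linarith
  qed
  have ahQ: "affine hull (convex hull Q) = affine hull Q" by (simp add: affine_hull_convex_hull)
  have f: "inner (a - q0) (b - v0) = 0" if "a \<in> affine hull Q" "b \<in> affine hull ?V" for a b
    using orth_aff[OF q0 v0 H that] by blast
  have uA: "u \<in> affine hull Q" using hull_inc[OF u, of affine] ahQ by simp
  have vA: "v \<in> affine hull ?V" by (rule hull_inc[OF vV])
  have zQ: "z0 \<in> affine hull Q" and zV: "z0 \<in> affine hull ?V" using assms(6) ahQ by auto
  have ab0: "inner (u - z0) (v - z0) = 0"
  proof -
    have "inner (u - z0) (v - z0) = inner (u - q0) (v - v0) - inner (u - q0) (z0 - v0)
       - inner (z0 - q0) (v - v0) + inner (z0 - q0) (z0 - v0)"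
      by (simp add: inner_diff_left inner_diff_right inner_commute algebra_simps)
    thus ?thesis using f uA vA zQ zV by simp
  qed
  have d1: "u - z0 - (x - z0) = u - x" "v - z0 - (x - z0) = v - x" by simp_all
  have "inner (u - z0 - (x - z0)) (v - z0 - (x - z0)) \<le> 0" using dot by (simp only: d1)
  from key[OF this ab0] have "norm (x - z0) \<le> norm (u - z0 - (v - z0))" .
  moreover have "u - z0 - (v - z0) = u - v" by simp
  ultimately have "dist z0 x \<le> dist u v" by (simp add: dist_norm norm_minus_commute)
  hence "ereal (dist z0 x) \<le> ereal (dist u v)" by simp
  moreover have "ereal (dist u v) \<le> (SUP (u, v) \<in> convex hull Q \<times> ?V. ereal (dist u v))"
  proof -
    have uv: "(u, v) \<in> convex hull Q \<times> ?V" using u hull_inc[OF vV, of convex] by (simp add: convex_hull_Times)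
    show ?thesis by (rule SUP_upper2[OF uv]) simp
  qed
  ultimately show "ereal (dist z0 x) \<le> (SUP (u, v) \<in> convex hull Q \<times> ?V. ereal (dist u v))"
    by (rule order_trans)
qed

end
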